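(* Let $\alpha$ be a parameter, $C=\frac18-\frac{\alpha^2}2$, $a_k(\alpha)=\frac{(\alpha-k+\frac12)_{2k}}{2^kk!}$ for $k\ge0$, $\psi(z,x)=\sum_{k\ge0}\frac{a_k(\alpha)}{z^k(1-x)^k}e^{zx}$, $\psi^*(z,x)=\psi(-z,x)$ and $D(z,w)=\frac{\psi(z,0)\partial_x\psi^*(w,0)-\psi^*(w,0)\partial_x\psi(z,0)}{w^2-z^2}$. Then $$D(z,w)=\frac1{z-w}+\sum_{m,n\ge0}\frac{A_{mn}(\alpha)}{z^m(-w)^n}$$ (in the sense that $\psi(z,0)\partial_x\psi^*(w,0)-\psi^*(w,0)\partial_x\psi(z,0)+(w+z)=(w^2-z^2)\sum_{m,n\ge0}A_{mn}(\alpha)z^{-m}(-w)^{-n}$) with $A_{mn}(\alpha)\in\mathbb Q[\alpha]$ determined by $$A_{m,n+1}(\alpha)-A_{m+1,n}(\alpha)=\frac{m-n}{m+n}a_m(\alpha)a_n(\alpha)\ \ ((m,n)\ne(0,0)),\qquad A_{m,0}(\alpha)=A_{0,n}(\alpha)=0,$$ and, for all $m,n\ge1$, explicitly given by each of $$A_{mn}(\alpha)=\sum_{r\ge m,\,s\ge0,\,r+s=m+n-1}\frac{r-s}{r+s}a_r(\alpha)a_s(\alpha)=\sum_{r\ge n,\,s\ge0,\,r+s=m+n-1}\frac{r-s}{r+s}a_r(\alpha)a_s(\alpha)$$ $$=\frac{2\,m!\,n!\,a_m(\alpha)a_n(\alpha)}{(m+n-1)\,(m+n-1)!}\sum_{k\in\mathbb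 Z}(-1)^k\frac{\binom{m+n-1}{m+k}\binom{m+n-1}{n+k}}{\alpha-k-\frac12}.$$
   Context: $(a)_j$ denotes the rising Pochhammer symbol; binomial coefficients with arguments out of range are $0$, so the sum over $k$ is finite. The functions $\psi,\psi^*$ are formal series in $z^{-1}$ with coefficients in $\mathbb Q[\alpha][[x]]$ times $e^{\pm zx}$; $\partial_x$ acts on the coefficients and on the exponential. *)

theory Defs
  imports "HOL-Analysis.Analysis" "HOL-Computational_Algebra.Polynomial"
begin

definition acoef :: "real \<Rightarrow> nat \<Rightarrow> real" where
  "acoef \<alpha> k = pochhammer (\<alpha> - real k + 1/2) (2*k) / (2^k * fact k)"

text \<open>A formal object  F(z,x) = sum_k c_k(x) z^(-k) e^(lam z x)  is represented by
  its coefficient functions c and the constant lam.  The following give the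
  coefficient of z^i (i an integer) of F(z,0) and of (d/dx F)(z,0), where
  d/dx acts on the coefficients and on the exponential.\<close>
definition eval0 :: "(nat \<Rightarrow> real \<Rightarrow> real) \<Rightarrow> int \<Rightarrow> real" where
  "eval0 c i = (if i \<le> 0 then c (nat (-i)) 0 else 0)"

definition dx0 :: "real \<Rightarrow> (nat \<Rightarrow> real \<Rightarrow> real) \<Rightarrow> int \<Rightarrow> real" where
  "dx0 lam c i = (if i \<le> 0 then deriv (c (nat (-i))) 0 else 0)
               + lam * (if i \<le> 1 then c (nat (1 - i)) 0 else 0)"

text \<open>psi(z,x) = sum_k a_k z^(-k) (1-x)^(-k) e^(zx): coefficients, with lam = 1.\<close>
definition psi_c :: "real \<Rightarrow> nat \<Rightarrow> real \<Rightarrow> real" where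
  "psi_c \<alpha> k x = acoef \<alpha> k / (1 - x) ^ k"

text \<open>psi*(w,x) = psi(-w,x) = sum_k (-1)^k a_k w^(-k) (1-x)^(-k) e^(-wx): lam = -1.\<close>
definition psistar_c :: "real \<Rightarrow> nat \<Rightarrow> real \<Rightarrow> real" where
  "psistar_c \<alpha> k x = (-1) ^ k * psi_c \<alpha> k x"

text \<open>Coefficient of z^i w^j in
  psi(z,0) d_x psi*(w,0) - psi*(w,0) d_x psi(z,0) + (w + z).\<close>
definition lhs_coeff :: "real \<Rightarrow> int \<Rightarrow> int \<Rightarrow> real" where
  "lhs_coeff \<alpha> i j =
     eval0 (psi_c \<alpha>) i * dx0 (-1) (psistar_c \<alpha>) j
   - eval0 (psistar_c \<alpha>) j * dx0 1 (psi_c \<alpha>) i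
   + (if i = 0 \<and> j = 1 then 1 else 0) + (if i = 1 \<and> j = 0 then 1 else 0)"

text \<open>Coefficient of z^i w^j in  sum_{m,n>=0} A_mn z^(-m) (-w)^(-n).\<close>
definition ser_coeff :: "(nat \<Rightarrow> nat \<Rightarrow> real) \<Rightarrow> int \<Rightarrow> int \<Rightarrow> real" where
  "ser_coeff A i j = (if i \<le> 0 \<and> j \<le> 0 then (-1) ^ nat (-j) * A (nat (-i)) (nat (-j)) else 0)"

text \<open>Coefficient of z^i w^j in  (w^2 - z^2) sum_{m,n>=0} A_mn z^(-m) (-w)^(-n).\<close>
definition rhs_coeff :: "(nat \<Rightarrow> nat \<Rightarrow> real) \<Rightarrow> int \<Rightarrow> int \<Rightarrow> real" where
  "rhs_coeff A i j = ser_coeff A i (j - 2) - ser_coeff A (i - 2) j"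

definition ibinom :: "nat \<Rightarrow> int \<Rightarrow> real" where
  "ibinom N j = (if 0 \<le> j then real (N choose nat j) else 0)"

end

theory Submission
  imports Defs
begin

definition ff :: "real \<Rightarrow> nat \<Rightarrow> nat \<Rightarrow> real" where
  "ff \<alpha> r s = (real r - real s) / (real r + real s) * acoef \<alpha> r * acoef \<alpha> s"

definition AA :: "nat \<Rightarrow> nat \<Rightarrow> real \<Rightarrow> real" where
  "AA m n \<alpha> = (\<Sum>r\<in>{m..m+n-1}. (real r - real (m+n-1-r)) / real (r + (m+n-1-r))
                                       * acoef \<alpha> r * acoef \<alpha> (m+n-1-r))"

lemma AA_ff: "AA m n \<alpha> = (\<Sum>r\<in>{m..m+n-1}. ff \<alpha> r (m+n-1-r))"
  unfolding AA_def ff_def by (intro sum.cong) auto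

lemma ff_anti: "ff \<alpha> s r = - ff \<alpha> r s"
  unfolding ff_def by (cases "real r + real s = 0") (simp_all add: field_simps)

lemma ff_diag_sum: "(\<Sum>r\<in>{0..M}. ff \<alpha> r (M - r)) = 0"
proof -
  have "(\<Sum>r\<in>{0..M}. ff \<alpha> r (M - r)) = (\<Sum>r\<in>{0..M}. ff \<alpha> (M - r) (M - (M - r)))"
    by (rule sum.reindex_bij_witness[where i="\<lambda>r. M - r" and j="\<lambda>r. M - r"]) auto
  also have "\<dots> = (\<Sum>r\<in>{0..M}. - ff \<alpha> r (M - r))"
  proof (intro sum.cong refl)
    fix r assume "r \<in> {0..M}"
    then have "M - (M - r) = r" by simp
    then show "ff \<alpha> (M - r) (M - (M - r)) = - ff \<alpha> r (M - r)" using ff_anti[of \<alpha> "M-r" r] by simp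
  qed
  finally show ?thesis by (simp add: sum_negf)
qed

lemma AA_rec: "AA m (n+1) \<alpha> - AA (m+1) n \<alpha> = ff \<alpha> m n"
proof -
  have "{m..m+n} = insert m {Suc m..m+n}" by auto
  then show ?thesis unfolding AA_ff by (simp add: sum.insert)
qed

lemma AA_m0: "AA m 0 \<alpha> = 0"
  unfolding AA_ff by (cases m) (auto simp: ff_def)

lemma AA_0n: "AA 0 n \<alpha> = 0"
  unfolding AA_ff using ff_diag_sum[where M="n-1" and \<alpha>=\<alpha>] by simp

lemma AA_unique:
  assumes "\<forall>\<alpha> m n. (m, n) \<noteq> (0, 0) \<longrightarrow>
           B m (n + 1) \<alpha> - B (m + 1) n \<alpha>
             = (real m - real n) / (real m + real n) * acoef \<alpha> m * acoef \<alpha> n"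
    and "\<forall>\<alpha> m. B m 0 \<alpha> = 0" and "\<forall>\<alpha> n. B 0 n \<alpha> = 0"
  shows "B = AA"
proof -
  have "\<forall>n. B m n \<alpha> = AA m n \<alpha>" for m \<alpha>
  proof (induction m)
    case 0 then show ?case using assms(3) AA_0n by simp
  next
    case (Suc m)
    show ?case
    proof
      fix n
      show "B (Suc m) n \<alpha> = AA (Suc m) n \<alpha>"
      proof (cases "n = 0")
        case True then show ?thesis using assms(2) AA_m0 by simp
      next
        case False
        then have "B m (n + 1) \<alpha> - B (m + 1) n \<alpha> = ff \<alpha> m n"
          using assms(1) unfolding ff_def by auto
        moreover have "AA m (n+1) \<alpha> - AA (m+1) n \<alpha> = ff \<alpha> m n" by (rule AA_rec)
        ultimately show ?thesis using Suc by simp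
      qed
    qed
  qed
  then show ?thesis by (intro ext) auto
qed

lemma summand_ff: "r \<le> M \<Longrightarrow> (real r - real (M-r)) / real (r + (M-r)) * acoef \<alpha> r * acoef \<alpha> (M-r) = ff \<alpha> r (M-r)"
  by (simp add: ff_def)

lemma AA_second_ff: "AA m n \<alpha> = (\<Sum>r\<in>{n..m+n-1}. ff \<alpha> r (m+n-1-r))"
proof (cases "m = 0 \<or> n = 0")
  case True
  then show ?thesis
  proof
    assume m0: "m = 0"
    have "AA 0 n \<alpha> = 0" by (rule AA_0n)
    then show ?thesis using m0 by (cases n) (auto simp: ff_def)
  next
    assume n: "n = 0"
    have "AA m 0 \<alpha> = 0" by (rule AA_m0)
    moreover have "(\<Sum>r\<in>{0..m-1}. ff \<alpha> r (m-1-r)) = 0" by (rule ff_diag_sum)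
    ultimately show ?thesis using n by simp
  qed
next
  case False
  define M where "M = m + n - 1"
  have split: "{0..M} = {0..m-1} \<union> {m..M}" "{0..m-1} \<inter> {m..M} = {}" using False by (auto simp: M_def)
  have "(\<Sum>r\<in>{0..M}. ff \<alpha> r (M - r)) = (\<Sum>r\<in>{0..m-1}. ff \<alpha> r (M - r)) + (\<Sum>r\<in>{m..M}. ff \<alpha> r (M - r))"
    unfolding split(1) by (rule sum.union_disjoint) (use split(2) in auto)
  then have A: "AA m n \<alpha> = - (\<Sum>r\<in>{0..m-1}. ff \<alpha> r (M - r))"
    using ff_diag_sum[of \<alpha> M] unfolding AA_ff M_def by simp
  have "(\<Sum>r\<in>{n..M}. ff \<alpha> r (M - r)) = (\<Sum>r\<in>{0..m-1}. ff \<alpha> (M - r) (M - (M - r)))"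
    by (rule sum.reindex_bij_witness[where i="\<lambda>r. M - r" and j="\<lambda>r. M - r"]) (use False in \<open>auto simp: M_def\<close>)
  also have "\<dots> = (\<Sum>r\<in>{0..m-1}. - ff \<alpha> r (M - r))"
  proof (intro sum.cong refl)
    fix r assume "r \<in> {0..m-1}"
    then have "M - (M - r) = r" using False by (simp add: M_def)
    then show "ff \<alpha> (M - r) (M - (M - r)) = - ff \<alpha> r (M - r)" using ff_anti[of \<alpha> "M-r" r] by simp
  qed
  also have "\<dots> = - (\<Sum>r\<in>{0..m-1}. ff \<alpha> r (M - r))" by (simp add: sum_negf)
  finally show ?thesis using A unfolding M_def by simp
qed

lemma AA_second: "AA m n \<alpha> = (\<Sum>r\<in>{n..m+n-1}. (real r - real (m+n-1-r)) / real (r + (m+n-1-r))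
                                       * acoef \<alpha> r * acoef \<alpha> (m+n-1-r))"
  unfolding AA_second_ff by (intro sum.cong refl) (simp add: ff_def)

lemma acoef_0[simp]: "acoef \<alpha> 0 = 1"
  by (simp add: acoef_def)

lemma acoef_Suc: "2 * real (Suc k) * acoef \<alpha> (Suc k) = (\<alpha>^2 - (real k + 1/2)^2) * acoef \<alpha> k"
proof -
  define x where "x = \<alpha> - real k - 1/2"
  have e1: "\<alpha> - real (Suc k) + 1/2 = x" by (simp add: x_def)
  have e2: "\<alpha> - real k + 1/2 = x + 1" by (simp add: x_def)
  have "pochhammer x (2 * Suc k) = pochhammer x (Suc (Suc (2*k)))" by simp
  also have "\<dots> = x * pochhammer (x+1) (Suc (2*k))" by (rule pochhammer_rec)
  also have "pochhammer (x+1) (Suc (2*k)) = (x + 1 + of_nat (2*k)) * pochhammer (x+1) (2*k)" by (rule pochhammer_rec')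
  finally have P: "pochhammer x (2 * Suc k) = x * (x + 1 + 2 * real k) * pochhammer (x+1) (2*k)" by simp
  have "2 * real (Suc k) * acoef \<alpha> (Suc k) = 2 * real (Suc k) * (x * (x + 1 + 2 * real k) * pochhammer (x+1) (2*k)) / (2^Suc k * fact (Suc k))"
    unfolding acoef_def e1 P by simp
  also have "\<dots> = (2 * real (Suc k)) * (x * (x + 1 + 2 * real k) * pochhammer (x+1) (2*k)) / ((2 * real (Suc k)) * (2^k * fact k))"
    by (simp add: algebra_simps)
  also have "\<dots> = (x * (x + 1 + 2 * real k) * pochhammer (x+1) (2*k)) / (2^k * fact k)"
    by (rule nonzero_mult_divide_mult_cancel_left) simp
  also have "\<dots> = (x * (x + 1 + 2 * real k)) * (pochhammer (x+1) (2*k) / (2^k * fact k))"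
    by simp
  also have "x * (x + 1 + 2 * real k) = \<alpha>^2 - (real k + 1/2)^2"
    by (simp add: x_def power2_eq_square algebra_simps)
  finally show ?thesis unfolding acoef_def e2 by simp
qed

lemma acoef_Suc': "acoef \<alpha> (Suc k) = (\<alpha>^2 - (real k + 1/2)^2) * acoef \<alpha> k / (2 * real (Suc k))"
  using acoef_Suc[of k \<alpha>] by (simp add: field_simps)

lemma AA_m1: "m \<ge> 1 \<Longrightarrow> AA m 1 \<alpha> = acoef \<alpha> m"
  unfolding AA_ff by (simp add: ff_def)

lemma AA_1n: "n \<ge> 1 \<Longrightarrow> AA 1 n \<alpha> = acoef \<alpha> n"
  using AA_rec[of 0 n \<alpha>] AA_0n[of "n+1" \<alpha>] by (simp add: ff_def)

lemma AA_main: "AA m (n+2) \<alpha> - AA (m+2) n \<alpha>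
   = (real n - real m) * acoef \<alpha> m * acoef \<alpha> n + acoef \<alpha> m * acoef \<alpha> (n+1) - acoef \<alpha> (m+1) * acoef \<alpha> n"
proof -
  have "AA m (n+2) \<alpha> - AA (m+2) n \<alpha> = (AA m ((n+1)+1) \<alpha> - AA (m+1) (n+1) \<alpha>) + (AA (m+1) (n+1) \<alpha> - AA ((m+1)+1) n \<alpha>)"
    by (simp add: numeral_2_eq_2)
  also have "\<dots> = ff \<alpha> m (n+1) + ff \<alpha> (m+1) n" by (simp only: AA_rec)
  also have "\<dots> = (real n - real m) * acoef \<alpha> m * acoef \<alpha> n + acoef \<alpha> m * acoef \<alpha> (n+1) - acoef \<alpha> (m+1) * acoef \<alpha> n"
  proof -
    have pos: "real m + real n + 1 \<noteq> 0" by simp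
    define am where "am = acoef \<alpha> m"
    define an where "an = acoef \<alpha> n"
    define bm where "bm = acoef \<alpha> (Suc m)"
    define bn where "bn = acoef \<alpha> (Suc n)"
    have Em: "2 * real (Suc m) * bm - (\<alpha>^2 - (real m + 1/2)^2) * am = 0" using acoef_Suc[of m \<alpha>] by (simp add: am_def bm_def)
    have En: "2 * real (Suc n) * bn - (\<alpha>^2 - (real n + 1/2)^2) * an = 0" using acoef_Suc[of n \<alpha>] by (simp add: an_def bn_def)
    have "(real m - real n - 1) * am * bn + (real m + 1 - real n) * bm * an
        - (real m + real n + 1) * ((real n - real m) * am * an + am * bn - bm * an)
       = an * (2 * real (Suc m) * bm - (\<alpha>^2 - (real m + 1/2)^2) * am)
        - am * (2 * real (Suc n) * bn - (\<alpha>^2 - (real n + 1/2)^2) * an)"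
      by (simp add: algebra_simps power2_eq_square)
    then have key: "(real m - real n - 1) * am * bn + (real m + 1 - real n) * bm * an
       = (real m + real n + 1) * ((real n - real m) * am * an + am * bn - bm * an)"
      using Em En by simp
    have "ff \<alpha> m (n+1) + ff \<alpha> (m+1) n = ((real m - real n - 1) * am * bn + (real m + 1 - real n) * bm * an) / (real m + real n + 1)"
    proof -
      have f1: "ff \<alpha> m (n+1) = (real m - real n - 1) * am * bn / (real m + real n + 1)"
        unfolding ff_def am_def bn_def by (simp add: algebra_simps)
      have f2: "ff \<alpha> (m+1) n = (real m + 1 - real n) * bm * an / (real m + real n + 1)"
        unfolding ff_def bm_def an_def by (simp add: algebra_simps)
      show ?thesis unfolding f1 f2 by (simp add: add_divide_distrib)
    qed
    also have "\<dots> = (real n - real m) * am * an + am * bn - bm * an"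
      unfolding key using pos by simp
    finally show ?thesis by (simp add: am_def an_def bm_def bn_def)
  qed
  finally show ?thesis .
qed

lemma deriv_psi: "deriv (\<lambda>x. c / (1 - x) ^ k) 0 = c * real k"
proof -
  have "((\<lambda>x::real. c / (1 - x) ^ k) has_real_derivative c * real k) (at 0)"
    by (auto intro!: derivative_eq_intros simp: field_simps)
  then show ?thesis by (rule DERIV_imp_deriv)
qed

lemma eval0_psi: "eval0 (psi_c \<alpha>) i = (if i \<le> 0 then acoef \<alpha> (nat (-i)) else 0)"
  by (simp add: eval0_def psi_c_def)
lemma eval0_psistar: "eval0 (psistar_c \<alpha>) i = (if i \<le> 0 then (-1)^nat (-i) * acoef \<alpha> (nat (-i)) else 0)"
  by (simp add: eval0_def psistar_c_def psi_c_def)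
lemma dx0_psi: "dx0 1 (psi_c \<alpha>) i = (if i \<le> 0 then real (nat (-i)) * acoef \<alpha> (nat (-i)) else 0)
    + (if i \<le> 1 then acoef \<alpha> (nat (1-i)) else 0)"
proof -
  have "psi_c \<alpha> k = (\<lambda>x. acoef \<alpha> k / (1 - x) ^ k)" for k by (rule ext) (simp add: psi_c_def)
  then show ?thesis by (simp add: dx0_def deriv_psi psi_c_def mult.commute)
qed
lemma dx0_psistar: "dx0 (-1) (psistar_c \<alpha>) i = (if i \<le> 0 then (-1)^nat (-i) * real (nat (-i)) * acoef \<alpha> (nat (-i)) else 0)
    - (if i \<le> 1 then (-1)^nat (1-i) * acoef \<alpha> (nat (1-i)) else 0)"
proof -
  have "psistar_c \<alpha> k = (\<lambda>x. ((-1)^k * acoef \<alpha> k) / (1 - x) ^ k)" for k by (rule ext) (simp add: psistar_c_def psi_c_def)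
  then show ?thesis by (simp add: dx0_def deriv_psi psistar_c_def psi_c_def mult_ac)
qed

lemma coeff_eq: "lhs_coeff \<alpha> i j = rhs_coeff (\<lambda>m n. AA m n \<alpha>) i j"
proof -
  have ci: "(\<exists>m. i = - int m) \<or> i = 1 \<or> i = 2 \<or> i \<ge> 3" by presburger
  have cj: "(\<exists>n. j = - int n) \<or> j = 1 \<or> j = 2 \<or> j \<ge> 3" by presburger
  note defs = lhs_coeff_def rhs_coeff_def ser_coeff_def eval0_psi eval0_psistar dx0_psi dx0_psistar
  from ci cj show ?thesis
  proof (elim disjE exE)
    fix m n assume i: "i = - int m" and j: "j = - int n"
    have a1: "nat (1 + int m) = Suc m" "nat (2 + int n) = Suc (Suc n)" "nat (2 + int m) = Suc (Suc m)" "nat (1 + int n) = Suc n" "nat (int n + 2) = Suc (Suc n)" "nat (int m + 2) = Suc (Suc m)" by auto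
    have "rhs_coeff (\<lambda>m n. AA m n \<alpha>) i j = (-1)^n * (AA m (n+2) \<alpha> - AA (m+2) n \<alpha>)"
      using i j by (simp add: rhs_coeff_def ser_coeff_def a1 algebra_simps)
    also have "\<dots> = lhs_coeff \<alpha> i j"
      unfolding AA_main using i j by (simp add: defs a1 algebra_simps)
    finally show ?thesis by simp
  next
    fix m assume i: "i = - int m" and j: "j = 1"
    show ?thesis using i j AA_m1[of m \<alpha>] AA_0n[of 1 \<alpha>] by (cases "m = 0") (auto simp: defs)
  next
    fix m assume i: "i = - int m" and j: "j = 2"
    show ?thesis using i j AA_m0[of m \<alpha>] by (auto simp: defs)
  next
    fix m assume i: "i = - int m" and j: "j \<ge> 3"
    show ?thesis using i j by (auto simp: defs)
  next
    fix n assume i: "i = 1" and j: "j = - int n"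
    show ?thesis using i j AA_1n[of n \<alpha>] AA_m0[of 1 \<alpha>] by (cases "n = 0") (auto simp: defs)
  next
    fix n assume i: "i = 2" and j: "j = - int n"
    show ?thesis using i j AA_0n[of n \<alpha>] by (auto simp: defs)
  next
    fix n assume i: "i \<ge> 3" and j: "j = - int n"
    show ?thesis using i j by (auto simp: defs)
  qed (auto simp: defs)
qed

definition rpf :: "(real \<Rightarrow> real) \<Rightarrow> bool" where
  "rpf f \<longleftrightarrow> (\<exists>p. (\<forall>i. coeff p i \<in> \<rat>) \<and> (\<forall>x. f x = poly p x))"

lemma rpf_const: "c \<in> \<rat> \<Longrightarrow> rpf (\<lambda>x. c)"
  unfolding rpf_def by (rule exI[of _ "[:c:]"]) (auto simp: coeff_pCons split: nat.split)

lemma rpf_id: "rpf (\<lambda>x. x)"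
  unfolding rpf_def by (rule exI[of _ "[:0,1:]"]) (auto simp: coeff_pCons split: nat.split)

lemma rpf_add: "rpf f \<Longrightarrow> rpf g \<Longrightarrow> rpf (\<lambda>x. f x + g x)"
  unfolding rpf_def
proof (elim exE conjE)
  fix p q assume "\<forall>i. coeff p i \<in> \<rat>" "\<forall>x. f x = poly p x" "\<forall>i. coeff q i \<in> \<rat>" "\<forall>x. g x = poly q x"
  then show "\<exists>r. (\<forall>i. coeff r i \<in> \<rat>) \<and> (\<forall>x. f x + g x = poly r x)"
    by (intro exI[of _ "p + q"]) auto
qed

lemma rpf_mult: "rpf f \<Longrightarrow> rpf g \<Longrightarrow> rpf (\<lambda>x. f x * g x)"
  unfolding rpf_def
proof (elim exE conjE)
  fix p q assume "\<forall>i. coeff p i \<in> \<rat>" "\<forall>x. f x = poly p x" "\<forall>i. coeff q i \<in> \<rat>" "\<forall>x. g x = poly q x"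
  then show "\<exists>r. (\<forall>i. coeff r i \<in> \<rat>) \<and> (\<forall>x. f x * g x = poly r x)"
    by (intro exI[of _ "p * q"]) (auto simp: coeff_mult intro!: Rats_sum Rats_mult)
qed

lemma rpf_sum: "finite A \<Longrightarrow> (\<And>a. a \<in> A \<Longrightarrow> rpf (f a)) \<Longrightarrow> rpf (\<lambda>x. \<Sum>a\<in>A. f a x)"
  by (induction A rule: finite_induct) (auto intro: rpf_add rpf_const)

lemma rpf_prod: "finite A \<Longrightarrow> (\<And>a. a \<in> A \<Longrightarrow> rpf (f a)) \<Longrightarrow> rpf (\<lambda>x. \<Prod>a\<in>A. f a x)"
  by (induction A rule: finite_induct) (auto intro: rpf_mult rpf_const)

lemma rpf_acoef: "rpf (\<lambda>\<alpha>. acoef \<alpha> k)"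
proof -
  have eq: "acoef \<alpha> k = (1 / (2^k * fact k)) * (\<Prod>i\<in>{0..<2*k}. \<alpha> + (real i - real k + 1/2))" for \<alpha>
    unfolding acoef_def pochhammer_prod by (simp add: algebra_simps)
  have fq: "(fact k :: real) \<in> \<rat>" by (metis Rats_of_nat of_nat_fact)
  moreover have "rpf (\<lambda>\<alpha>. (1 / (2^k * fact k)) * (\<Prod>i\<in>{0..<2*k}. \<alpha> + (real i - real k + 1/2)))"
    by (intro rpf_mult rpf_const rpf_prod rpf_add rpf_id)
       (auto intro!: Rats_divide Rats_mult Rats_add Rats_diff fq)
  ultimately show ?thesis by (simp only: eq)
qed

lemma rpf_AA: "rpf (AA m n)"
proof -
  have "AA m n = (\<lambda>\<alpha>. \<Sum>r\<in>{m..m+n-1}. ((real r - real (m+n-1-r)) / real (r + (m+n-1-r)))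
                                       * acoef \<alpha> r * acoef \<alpha> (m+n-1-r))"
    by (rule ext) (simp add: AA_def)
  moreover have "rpf \<dots>"
    by (intro rpf_sum rpf_mult rpf_const rpf_acoef) (auto intro!: Rats_divide Rats_diff)
  ultimately show ?thesis by simp
qed

lemma rpf_ratpoly: "rpf f \<Longrightarrow> \<exists>p :: rat poly. \<forall>\<alpha>. f \<alpha> = poly (map_poly of_rat p) \<alpha>"
  unfolding rpf_def
proof (elim exE conjE)
  fix p :: "real poly" assume "\<forall>i. coeff p i \<in> \<rat>" "\<forall>x. f x = poly p x"
  then obtain q where "p = map_poly of_rat q" by (metis ratpolyE)
  then show ?thesis using \<open>\<forall>x. f x = poly p x\<close> by auto
qed

lemma coeff_lin_pow: "coeff ([:1, b:] ^ n) i = of_nat (n choose i) * (b::real) ^ i"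
proof (cases "i \<le> n")
  case True then show ?thesis using coeff_linear_poly_power[OF True, of 1 b] by simp
next
  case False
  have "degree ([:1, b:] ^ n) \<le> n"
    by (rule order.trans[OF degree_power_le]) (simp add: degree_pCons_le)
  then have "coeff ([:1, b:] ^ n) i = 0" using False by (intro coeff_eq_0) simp
  then show ?thesis using False by simp
qed

definition gq :: "nat \<Rightarrow> nat \<Rightarrow> real" where
  "gq L t = coeff ([:1, 0, -1:] ^ L) t"

lemma sq_poly_expand: "([:1, 0, -1:] :: real poly) ^ L = (\<Sum>k\<le>L. monom (of_nat (L choose k) * (-1)^k) (2*k))"
proof -
  have "([:1, 0, -1:] :: real poly) = monom (-1) 2 + 1"
    by (simp add: monom_altdef numeral_2_eq_2 one_pCons)
  then have "([:1, 0, -1:] :: real poly) ^ L = (\<Sum>k\<le>L. of_nat (L choose k) * (monom (-1) 2)^k * 1^(L-k))"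
    by (simp add: binomial_ring)
  also have "\<dots> = (\<Sum>k\<le>L. monom (of_nat (L choose k) * (-1)^k) (2*k))"
    by (intro sum.cong refl) (simp add: monom_power of_nat_monom mult_monom mult.commute)
  finally show ?thesis .
qed

lemma gq_even: "gq L (2*r) = (-1)^r * real (L choose r)"
proof -
  have "gq L (2*r) = (\<Sum>k\<le>L. (if 2*k = 2*r then of_nat (L choose k) * (-1)^k else 0))"
    unfolding gq_def sq_poly_expand coeff_sum by simp
  also have "\<dots> = (\<Sum>k\<le>L. (if k = r then of_nat (L choose k) * (-1)^k else 0))"
    by (intro sum.cong) auto
  also have "\<dots> = (-1)^r * real (L choose r)"
    by (cases "r \<le> L") (auto simp: sum.delta)
  finally show ?thesis .
qed

lemma gq_odd: "gq L (Suc (2*r)) = 0"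
  unfolding gq_def sq_poly_expand coeff_sum by (auto intro!: sum.neutral) presburger

lemma conv0: "(\<Sum>j\<le>t. (-1)^j * real (L choose j) * real (L choose (t - j))) = gq L t"
proof -
  have "[:1, -1:] ^ L * [:1, 1:] ^ L = ([:1, 0, -1:] :: real poly) ^ L"
    by (simp add: power_mult_distrib[symmetric])
  then have "gq L t = coeff ([:1, -1:] ^ L * [:1, 1:] ^ L) t" by (simp add: gq_def)
  also have "\<dots> = (\<Sum>j\<le>t. (-1)^j * real (L choose j) * real (L choose (t - j)))"
    unfolding coeff_mult coeff_lin_pow by (simp add: mult_ac)
  finally show ?thesis by simp
qed

lemma conv_h: "(\<Sum>i\<le>s. (-1)^i * real (K choose i) * real (Suc K choose (s - i)))
     = gq K s + (if s = 0 then 0 else gq K (s - 1))"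
proof -
  have m: "[:1, -1:] * [:1, 1:] = ([:1, 0, -1:] :: real poly)" by simp
  have "[:1, -1:] ^ K * [:1, 1:] ^ Suc K = ([:1, -1:] ^ K * [:1, 1:] ^ K) * ([:1, 1:] :: real poly)"
    by (simp only: power_Suc2 mult.assoc)
  also have "\<dots> = ([:1, 0, -1:] :: real poly) ^ K * [:1, 1:]"
    by (simp only: power_mult_distrib[symmetric] m)
  also have "\<dots> = ([:1, 0, -1:] :: real poly) ^ K + pCons 0 (([:1, 0, -1:] :: real poly) ^ K)"
    by (simp only: mult_pCons_right) simp
  finally have e: "[:1, -1:] ^ K * [:1, 1:] ^ Suc K = ([:1, 0, -1:] :: real poly) ^ K + pCons 0 (([:1, 0, -1:] :: real poly) ^ K)" .
  have "(\<Sum>i\<le>s. (-1)^i * real (K choose i) * real (Suc K choose (s - i))) = coeff ([:1, -1:] ^ K * [:1, 1:] ^ Suc K) s"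
    unfolding coeff_mult coeff_lin_pow by (simp add: mult_ac)
  also have "\<dots> = gq K s + (if s = 0 then 0 else gq K (s - 1))"
    unfolding e gq_def by (cases s) auto
  finally show ?thesis .
qed

lemma hlp_sign: "(a::real) * ((-1)^Suc i * b * c) = - (a*b) * ((-1)^i * c)"
  by simp

lemma W0: "m \<ge> 1 \<Longrightarrow> (\<Sum>j<2*m. (-1)^j * real (N choose j) * real (N choose (2*m - 1 - j))) = 0"
proof -
  assume m: "m \<ge> 1"
  have e: "{..<2*m} = {..Suc (2*(m-1))}" "2*m - 1 = Suc (2*(m-1))" using m by auto
  show ?thesis unfolding e conv0 gq_odd ..
qed

lemma W1: assumes m: "m \<ge> 1" and N: "N \<ge> 1"
  shows "(\<Sum>j<2*m. real j * ((-1)^j * real (N choose j) * real (N choose (2*m - 1 - j)))) = (-1)^m * real m * real (N choose m)"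
proof -
  define K where "K = N - 1"
  have NK: "N = Suc K" using N by (simp add: K_def)
  have "(\<Sum>j<2*m. real j * ((-1)^j * real (N choose j) * real (N choose (2*m - 1 - j))))
      = (\<Sum>j<Suc (2*m-1). real j * ((-1)^j * real (N choose j) * real (N choose (2*m - 1 - j))))"
    using m by simp
  also have "\<dots> = (\<Sum>i<2*m-1. real (Suc i) * ((-1)^Suc i * real (N choose Suc i) * real (N choose (2*m - 1 - Suc i))))"
    by (subst sum.lessThan_Suc_shift) simp
  also have "\<dots> = (\<Sum>i<2*m-1. - real N * ((-1)^i * real (K choose i) * real (Suc K choose (2*(m-1) - i))))"
  proof (intro sum.cong refl)
    fix i assume "i \<in> {..<2*m-1}"
    have "Suc i * (N choose Suc i) = N * (K choose i)"
      using times_binomial_minus1_eq[of "Suc i" N] by (simp add: K_def)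
    then have "real (Suc i) * real (N choose Suc i) = real N * real (K choose i)"
      by (metis of_nat_mult)
    moreover have a: "2*m - 1 - Suc i = 2*(m-1) - i" using m by arith
    moreover have e2: "N choose (2*m - 1 - Suc i) = Suc K choose (2*(m-1) - i)" by (simp only: a NK)
    ultimately show "real (Suc i) * ((-1)^Suc i * real (N choose Suc i) * real (N choose (2*m - 1 - Suc i)))
      = - real N * ((-1)^i * real (K choose i) * real (Suc K choose (2*(m-1) - i)))"
      by (simp only: hlp_sign e2) (simp add: algebra_simps)
  qed
  also have "\<dots> = - real N * (\<Sum>i\<le>2*(m-1). (-1)^i * real (K choose i) * real (Suc K choose (2*(m-1) - i)))"
  proof -
    have "{..<2*m-1} = {..2*(m-1)}" using m by auto
    then show ?thesis by (simp add: sum_distrib_left)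
  qed
  also have "\<dots> = - real N * ((-1)^(m-1) * real (K choose (m-1)))"
  proof -
    have "(if 2*(m-1) = 0 then 0 else gq K (2*(m-1) - 1)) = 0"
    proof (cases "m = 1")
      case False
      then have "2*(m-1) - 1 = Suc (2*(m-2))" using m by auto
      then show ?thesis by (simp add: gq_odd)
    qed simp
    then show ?thesis unfolding conv_h gq_even by simp
  qed
  also have "\<dots> = (-1)^m * real m * real (N choose m)"
  proof -
    have "m * (N choose m) = N * (K choose (m-1))"
      using times_binomial_minus1_eq[of m N] m by (simp add: K_def)
    then have "real m * real (N choose m) = real N * real (K choose (m-1))"
      by (metis of_nat_mult)
    moreover have "(-1::real)^m = - ((-1)^(m-1))" using m by (cases m) auto
    ultimately show ?thesis by simp
  qed
  finally show ?thesis .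
qed

lemma ibinom_nat[simp]: "ibinom N (int j) = real (N choose j)"
  by (simp add: ibinom_def)

lemma ibinom_neg: "j < 0 \<Longrightarrow> ibinom N j = 0"
  by (simp add: ibinom_def)

lemma ibinom_big: "j > int N \<Longrightarrow> ibinom N j = 0"
  by (simp add: ibinom_def)

lemma sign_abs: "(-1::real)^nat \<bar>int j - int m\<bar> = (-1)^j * (-1)^m"
proof (cases "j \<ge> m")
  case True
  then obtain d where d: "j = m + d" using le_Suc_ex by blast
  have "(-1::real)^m * (-1)^m = 1" by (simp add: power_add[symmetric] mult_2[symmetric] power_mult)
  then show ?thesis using d by (simp add: power_add algebra_simps)
next
  case False
  then obtain d where d: "m = j + d" using le_Suc_ex[of j m] by auto
  have "(-1::real)^j * (-1)^j = 1" by (simp add: power_add[symmetric] mult_2[symmetric] power_mult)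
  then show ?thesis using d by (simp add: power_add algebra_simps nat_abs_mult_distrib)
qed

lemma U_convert:
  fixes h :: "int \<Rightarrow> real"
  assumes m: "m \<ge> 1" and N: "N = m + n"
  shows "(\<Sum>k\<in>{-(int N + 1)..int N + 1}. h k * ((-1)^nat \<bar>k\<bar> * ibinom N (int m + k) * ibinom N (int n + 1 + k)))
       = (\<Sum>j<2*m. h (int j - int m) * ((-1)^m * ((-1)^j * real (N choose j) * real (N choose (2*m - 1 - j)))))"
proof -
  let ?u = "\<lambda>k. h k * ((-1)^nat \<bar>k\<bar> * ibinom N (int m + k) * ibinom N (int n + 1 + k))"
  have "(\<Sum>k\<in>{-(int N + 1)..int N + 1}. ?u k) = (\<Sum>k\<in>{-int m..int m - 1}. ?u k)"
  proof (rule sum.mono_neutral_right)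
    show "\<forall>k\<in>{-(int N + 1)..int N + 1} - {-int m..int m - 1}. ?u k = 0"
    proof
      fix k assume "k \<in> {-(int N + 1)..int N + 1} - {-int m..int m - 1}"
      then have "int m + k < 0 \<or> int n + 1 + k > int N" using N by auto
      then show "?u k = 0" by (auto simp: ibinom_neg ibinom_big)
    qed
  qed (use N in auto)
  also have "\<dots> = (\<Sum>j<2*m. ?u (int j - int m))"
    by (rule sum.reindex_bij_witness[where j="\<lambda>k. nat (k + int m)" and i="\<lambda>j. int j - int m"]) auto
  also have "\<dots> = (\<Sum>j<2*m. h (int j - int m) * ((-1)^m * ((-1)^j * real (N choose j) * real (N choose (2*m - 1 - j)))))"
  proof (intro sum.cong refl)
    fix j assume j: "j \<in> {..<2*m}"
    have b1: "ibinom N (int m + (int j - int m)) = real (N choose j)" by simp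
    have b2: "ibinom N (int n + 1 + (int j - int m)) = real (N choose (2*m - 1 - j))"
    proof (cases "n + 1 + j \<ge> m")
      case True
      then have e: "int n + 1 + (int j - int m) = int (n + 1 + j - m)" by simp
      have "n + 1 + j - m \<le> N" using j N by auto
      then have "N choose (n + 1 + j - m) = N choose (N - (n + 1 + j - m))" by (rule binomial_symmetric)
      moreover have "N - (n + 1 + j - m) = 2*m - 1 - j" using j N True by auto
      ultimately show ?thesis unfolding e ibinom_nat by simp
    next
      case False
      then have "N < 2*m - 1 - j" using N by auto
      then show ?thesis using False by (simp add: ibinom_neg binomial_eq_0)
    qed
    show "?u (int j - int m) = h (int j - int m) * ((-1)^m * ((-1)^j * real (N choose j) * real (N choose (2*m - 1 - j))))"
      unfolding b1 b2 sign_abs by (simp add: algebra_simps)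
  qed
  finally show ?thesis .
qed

lemma U0: assumes N: "N = m + n"
  shows "(\<Sum>k\<in>{-(int N + 1)..int N + 1}. (-1)^nat \<bar>k\<bar> * ibinom N (int m + k) * ibinom N (int n + 1 + k)) = 0"
proof (cases "m = 0")
  case True
  have z: "(-1)^nat \<bar>k\<bar> * ibinom N (int m + k) * ibinom N (int n + 1 + k) = 0" for k
    using True N by (cases "k < 0") (auto simp: ibinom_neg ibinom_big)
  show ?thesis by (rule sum.neutral, rule ballI, rule z)
next
  case False
  then have m: "m \<ge> 1" by simp
  have "(\<Sum>k\<in>{-(int N + 1)..int N + 1}. (-1)^nat \<bar>k\<bar> * ibinom N (int m + k) * ibinom N (int n + 1 + k))
     = (\<Sum>k\<in>{-(int N + 1)..int N + 1}. (\<lambda>_. 1) k * ((-1)^nat \<bar>k\<bar> * ibinom N (int m + k) * ibinom N (int n + 1 + k)))"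
    by simp
  also have "\<dots> = (\<Sum>j<2*m. (-1)^m * ((-1)^j * real (N choose j) * real (N choose (2*m - 1 - j))))"
    unfolding U_convert[OF m N] by simp
  also have "\<dots> = 0" unfolding sum_distrib_left[symmetric] W0[OF m] by simp
  finally show ?thesis .
qed

lemma U1: assumes N: "N = m + n"
  shows "(\<Sum>k\<in>{-(int N + 1)..int N + 1}. real_of_int k * ((-1)^nat \<bar>k\<bar> * ibinom N (int m + k) * ibinom N (int n + 1 + k)))
     = real m * real (N choose m)"
proof (cases "m = 0")
  case True
  have z: "(-1)^nat \<bar>k\<bar> * ibinom N (int m + k) * ibinom N (int n + 1 + k) = 0" for k
    using True N by (cases "k < 0") (auto simp: ibinom_neg ibinom_big)
  have "(\<Sum>k\<in>{-(int N + 1)..int N + 1}. real_of_int k * ((-1)^nat \<bar>k\<bar> * ibinom N (int m + k) * ibinom N (int n + 1 + k))) = 0"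
    by (rule sum.neutral, rule ballI) (simp only: z mult_zero_right)
  then show ?thesis using True by simp
next
  case False
  then have m: "m \<ge> 1" by simp
  have N1: "N \<ge> 1" using m N by simp
  let ?w = "\<lambda>j. (-1)^j * real (N choose j) * real (N choose (2*m - 1 - j))"
  have "(\<Sum>k\<in>{-(int N + 1)..int N + 1}. real_of_int k * ((-1)^nat \<bar>k\<bar> * ibinom N (int m + k) * ibinom N (int n + 1 + k)))
     = (\<Sum>j<2*m. real_of_int (int j - int m) * ((-1)^m * ?w j))"
    by (rule U_convert[OF m N])
  also have "\<dots> = (-1)^m * ((\<Sum>j<2*m. real j * ?w j) - real m * (\<Sum>j<2*m. ?w j))"
    by (simp add: sum_distrib_left sum_subtractf algebra_simps)
  also have "\<dots> = (-1)^m * ((-1)^m * real m * real (N choose m))"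
    using W1[OF m N1] W0[OF m, of N] by simp
  also have "\<dots> = real m * real (N choose m)"
    by (simp add: power_add[symmetric] mult_2[symmetric] power_mult)
  finally show ?thesis .
qed

lemma choose_succ_nat: "Suc i * (N choose Suc i) = (N - i) * (N choose i)"
proof -
  have "Suc i * (N choose Suc i) = N * ((N - 1) choose i)"
    using times_binomial_minus1_eq[of "Suc i" N] by simp
  also have "\<dots> = (N - i) * (N choose i)" using binomial_absorb_comp[of N i] by simp
  finally show ?thesis .
qed

lemma ib_succ: "ibinom N (j + 1) * real_of_int (j + 1) = ibinom N j * (real N - real_of_int j)"
proof (cases "j \<ge> 0")
  case True
  then obtain i where i: "j = int i" by (metis nonneg_eq_int)
  have e: "j + 1 = int (Suc i)" using i by simp
  have e1: "ibinom N (j + 1) = real (N choose Suc i)" unfolding e ibinom_nat ..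
  have e2: "ibinom N j = real (N choose i)" unfolding i ibinom_nat ..
  have e3: "real_of_int (j + 1) = real (Suc i)" "real_of_int j = real i" using i by auto
  have "real (Suc i) * real (N choose Suc i) = real (N - i) * real (N choose i)"
    using choose_succ_nat[of i N] by (metis of_nat_mult)
  also have "real (N - i) * real (N choose i) = (real N - real i) * real (N choose i)"
    by (cases "i \<le> N") (auto simp: binomial_eq_0)
  finally show ?thesis unfolding e1 e2 e3 by (simp add: mult.commute)
next
  case False
  then show ?thesis by (cases "j = -1") (auto simp: ibinom_neg)
qed

lemma E_k:
  assumes N: "N = m + n"
  shows "((real_of_int k + 1/2)^2 - (real n + 1/2)^2) * (ibinom N (int m + k) * ibinom N (int n + 1 + k))
       = ((real_of_int k + 1/2)^2 - (real m + 1/2)^2) * (ibinom N (int m + 1 + k) * ibinom N (int n + k))"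
proof -
  define A where "A = ibinom N (int m + k)"
  define B where "B = ibinom N (int n + k)"
  define A1 where "A1 = ibinom N (int m + 1 + k)"
  define B1 where "B1 = ibinom N (int n + 1 + k)"
  have h1: "B1 * (real n + 1 + real_of_int k) = B * (real m - real_of_int k)"
    using ib_succ[of N "int n + k"] N unfolding B_def B1_def by (simp add: algebra_simps)
  have h2: "A1 * (real m + 1 + real_of_int k) = A * (real n - real_of_int k)"
    using ib_succ[of N "int m + k"] N unfolding A_def A1_def by (simp add: algebra_simps)
  have "((real_of_int k + 1/2)^2 - (real n + 1/2)^2) * (A * B1) = (real_of_int k - real n) * A * (B1 * (real n + 1 + real_of_int k))"
    by (simp add: algebra_simps power2_eq_square)
  also have "\<dots> = (real_of_int k - real n) * A * (B * (real m - real_of_int k))" by (simp only: h1)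
  also have "\<dots> = (real_of_int k - real m) * B * (A * (real n - real_of_int k))" by (simp add: algebra_simps)
  also have "\<dots> = (real_of_int k - real m) * B * (A1 * (real m + 1 + real_of_int k))" by (simp only: h2)
  also have "\<dots> = ((real_of_int k + 1/2)^2 - (real m + 1/2)^2) * (A1 * B)"
    by (simp add: algebra_simps power2_eq_square)
  finally show ?thesis unfolding A_def B_def A1_def B1_def .
qed

lemma hlp_div: "(c1::real) * (s * u / D) - c2 * (s * v / D) = s * ((c1 * u - c2 * v) / D)"
  by (cases "D = 0") (simp_all add: field_simps)

lemma hlp_sum: "(\<Sum>k\<in>A. (a::real) * (f k - g k) + h k - j k + (1/2) * (f k - g k))
   = a * (sum f A - sum g A) + sum h A - sum j A + (1/2) * (sum f A - sum g A)"
  by (simp only: sum.distrib sum_subtractf sum_distrib_left[symmetric])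

lemma star:
  assumes N: "N = m + n" and nh: "\<forall>k::int. \<alpha> \<noteq> real_of_int k + 1/2"
  shows "(\<alpha>^2 - (real n + 1/2)^2) * (\<Sum>k\<in>{-(int N + 1)..int N + 1}. (-1)^nat \<bar>k\<bar> * ibinom N (int m + k) * ibinom N (int n + 1 + k) / (\<alpha> - real_of_int k - 1/2))
       - (\<alpha>^2 - (real m + 1/2)^2) * (\<Sum>k\<in>{-(int N + 1)..int N + 1}. (-1)^nat \<bar>k\<bar> * ibinom N (int m + 1 + k) * ibinom N (int n + k) / (\<alpha> - real_of_int k - 1/2))
       = (real m - real n) * real (N choose m)"
proof -
  let ?R = "{-(int N + 1)..int N + 1}"
  define s where "s k = (-1::real)^nat \<bar>k\<bar>" for k :: int
  define u where "u k = ibinom N (int m + k) * ibinom N (int n + 1 + k)" for k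
  define v where "v k = ibinom N (int m + 1 + k) * ibinom N (int n + k)" for k
  have U0': "(\<Sum>k\<in>?R. s k * u k) = 0" using U0[OF N] unfolding s_def u_def by (simp add: mult_ac)
  have U1': "(\<Sum>k\<in>?R. real_of_int k * (s k * u k)) = real m * real (N choose m)"
    using U1[OF N] unfolding s_def u_def by (simp add: mult_ac)
  have N': "N = n + m" using N by simp
  have V0': "(\<Sum>k\<in>?R. s k * v k) = 0" using U0[OF N'] unfolding s_def v_def by (simp add: mult_ac)
  have V1': "(\<Sum>k\<in>?R. real_of_int k * (s k * v k)) = real n * real (N choose n)"
    using U1[OF N'] unfolding s_def v_def by (simp add: mult_ac)
  have Cs: "N choose n = N choose m" using N binomial_symmetric[of m N] by simp
  have trm: "(\<alpha>^2 - (real n + 1/2)^2) * (s k * u k / (\<alpha> - real_of_int k - 1/2))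
      - (\<alpha>^2 - (real m + 1/2)^2) * (s k * v k / (\<alpha> - real_of_int k - 1/2))
      = \<alpha> * (s k * u k - s k * v k) + real_of_int k * (s k * u k) - real_of_int k * (s k * v k)
        + (1/2) * (s k * u k - s k * v k)" for k
  proof -
    have d: "\<alpha> - real_of_int k - 1/2 \<noteq> 0"
    proof
      assume "\<alpha> - real_of_int k - 1/2 = 0"
      then have "\<alpha> = real_of_int k + 1/2" by simp
      then show False using nh by blast
    qed
    have E: "((real_of_int k + 1/2)^2 - (real n + 1/2)^2) * u k = ((real_of_int k + 1/2)^2 - (real m + 1/2)^2) * v k"
      using E_k[OF N, of k] unfolding u_def v_def .
    have "(\<alpha>^2 - (real n + 1/2)^2) * u k - (\<alpha>^2 - (real m + 1/2)^2) * v k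
        = (\<alpha> - real_of_int k - 1/2) * ((\<alpha> + real_of_int k + 1/2) * (u k - v k))
          + (((real_of_int k + 1/2)^2 - (real n + 1/2)^2) * u k - ((real_of_int k + 1/2)^2 - (real m + 1/2)^2) * v k)"
      by (simp add: field_simps power2_eq_square)
    also have "\<dots> = (\<alpha> - real_of_int k - 1/2) * ((\<alpha> + real_of_int k + 1/2) * (u k - v k))"
      using E by simp
    finally have X: "(\<alpha>^2 - (real n + 1/2)^2) * u k - (\<alpha>^2 - (real m + 1/2)^2) * v k
        = (\<alpha> - real_of_int k - 1/2) * ((\<alpha> + real_of_int k + 1/2) * (u k - v k))" .
    have "(\<alpha>^2 - (real n + 1/2)^2) * (s k * u k / (\<alpha> - real_of_int k - 1/2))
      - (\<alpha>^2 - (real m + 1/2)^2) * (s k * v k / (\<alpha> - real_of_int k - 1/2))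
      = s k * (((\<alpha>^2 - (real n + 1/2)^2) * u k - (\<alpha>^2 - (real m + 1/2)^2) * v k) / (\<alpha> - real_of_int k - 1/2))"
      by (rule hlp_div)
    also have "\<dots> = s k * ((\<alpha> + real_of_int k + 1/2) * (u k - v k))"
      unfolding X using d by simp
    also have "\<dots> = \<alpha> * (s k * u k - s k * v k) + real_of_int k * (s k * u k) - real_of_int k * (s k * v k)
        + (1/2) * (s k * u k - s k * v k)" by (simp add: field_simps)
    finally show ?thesis .
  qed
  have "(\<alpha>^2 - (real n + 1/2)^2) * (\<Sum>k\<in>?R. s k * u k / (\<alpha> - real_of_int k - 1/2))
       - (\<alpha>^2 - (real m + 1/2)^2) * (\<Sum>k\<in>?R. s k * v k / (\<alpha> - real_of_int k - 1/2))
      = (\<Sum>k\<in>?R. \<alpha> * (s k * u k - s k * v k) + real_of_int k * (s k * u k) - real_of_int k * (s k * v k)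
        + (1/2) * (s k * u k - s k * v k))"
    unfolding sum_distrib_left sum_subtractf[symmetric] trm[symmetric] ..
  also have "\<dots> = \<alpha> * ((\<Sum>k\<in>?R. s k * u k) - (\<Sum>k\<in>?R. s k * v k)) + (\<Sum>k\<in>?R. real_of_int k * (s k * u k))
      - (\<Sum>k\<in>?R. real_of_int k * (s k * v k)) + (1/2) * ((\<Sum>k\<in>?R. s k * u k) - (\<Sum>k\<in>?R. s k * v k))"
    by (rule hlp_sum)
  also have "\<dots> = (real m - real n) * real (N choose m)"
    unfolding U0' V0' U1' V1' Cs by (simp add: algebra_simps)
  finally show ?thesis unfolding s_def u_def v_def by (simp add: mult_ac)
qed

definition Tf :: "nat \<Rightarrow> nat \<Rightarrow> real \<Rightarrow> real" where
  "Tf m n \<alpha> = 2 * fact m * fact n * acoef \<alpha> m * acoef \<alpha> n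
                      / (real (m+n-1) * fact (m+n-1))
                    * (\<Sum>k\<in>{-(int m + int n)..int m + int n}.
                         (-1) ^ nat \<bar>k\<bar> * ibinom (m+n-1) (int m + k) * ibinom (m+n-1) (int n + k)
                         / (\<alpha> - real_of_int k - 1/2))"

lemma Tf_0: assumes "n \<ge> 1" shows "Tf 0 n \<alpha> = 0"
proof -
  have "(-1) ^ nat \<bar>k\<bar> * ibinom (n-1) (int 0 + k) * ibinom (n-1) (int n + k) / (\<alpha> - real_of_int k - 1/2) = 0" for k
  proof (cases "k < 0")
    case True then show ?thesis by (simp add: ibinom_neg)
  next
    case False then have "int n + k > int (n - 1)" using \<open>n \<ge> 1\<close> by auto
    then show ?thesis by (simp add: ibinom_big)
  qed
  then have "(\<Sum>k\<in>{-(int 0 + int n)..int 0 + int n}. (-1) ^ nat \<bar>k\<bar> * ibinom (0+n-1) (int 0 + k) * ibinom (0+n-1) (int n + k) / (\<alpha> - real_of_int k - 1/2)) = 0"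
    by (intro sum.neutral ballI) simp
  then show ?thesis unfolding Tf_def by (simp only: mult_zero_right)
qed

lemma fact_acoef_Suc: "2 * fact (Suc n) * acoef \<alpha> (Suc n) = fact n * ((\<alpha>^2 - (real n + 1/2)^2) * acoef \<alpha> n)"
proof -
  have "2 * fact (Suc n) * acoef \<alpha> (Suc n) = fact n * (2 * real (Suc n) * acoef \<alpha> (Suc n))"
    by (simp add: fact_Suc algebra_simps)
  then show ?thesis unfolding acoef_Suc .
qed

lemma hT: "(p * q * (r * (c * t)) / D * S :: real) = (p * r * q * t / D) * (c * S)"
  by (simp add: divide_inverse mult_ac)

lemma h20: "(2 * a * b * c * d / D * S :: real) = a * c * (2 * b * d) / D * S"
  by (simp add: divide_inverse mult_ac)
lemma h32: "(2 * a * b * c * d / D * S :: real) = b * d * (2 * a * c) / D * S"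
  by (simp add: divide_inverse mult_ac)
lemma h34: "(p * q * (r * (c * t)) / D * S :: real) = (r * p * t * q / D) * (c * S)"
  by (simp add: divide_inverse mult_ac)
lemma h49: "(a * b * c * d / D) * (x * C) = x * c * d * (a * b * C) / (D :: real)"
  by (simp add: divide_inverse mult_ac)
lemma h55: "(x * c * d / D :: real) = x / D * c * d"
  by (simp add: divide_inverse mult_ac)

lemma K_step:
  assumes n: "n \<ge> 1" and nh: "\<forall>k::int. \<alpha> \<noteq> real_of_int k + 1/2"
  shows "Tf m (Suc n) \<alpha> - Tf (Suc m) n \<alpha> = ff \<alpha> m n"
proof -
  define N where "N = m + n"
  have N0: "real N \<noteq> 0" using n by (simp add: N_def)
  let ?R = "{-(int N + 1)..int N + 1}"
  define S1 where "S1 = (\<Sum>k\<in>?R. (-1)^nat \<bar>k\<bar> * ibinom N (int m + k) * ibinom N (int n + 1 + k) / (\<alpha> - real_of_int k - 1/2))"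
  define S2 where "S2 = (\<Sum>k\<in>?R. (-1)^nat \<bar>k\<bar> * ibinom N (int m + 1 + k) * ibinom N (int n + k) / (\<alpha> - real_of_int k - 1/2))"
  define X where "X = fact m * fact n * acoef \<alpha> m * acoef \<alpha> n / (real N * fact N)"
  have e1: "m + Suc n - 1 = N" "int m + int (Suc n) = int N + 1" using n by (auto simp: N_def)
  have e2: "Suc m + n - 1 = N" "int (Suc m) + int n = int N + 1" using n by (auto simp: N_def)
  have T1: "Tf m (Suc n) \<alpha> = X * ((\<alpha>^2 - (real n + 1/2)^2) * S1)"
  proof -
    have s1: "(\<Sum>k\<in>{-(int m + int (Suc n))..int m + int (Suc n)}. (-1)^nat \<bar>k\<bar> * ibinom N (int m + k) * ibinom N (int (Suc n) + k) / (\<alpha> - real_of_int k - 1/2)) = S1"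
      unfolding S1_def e1(2) by (intro sum.cong refl) (simp add: add_ac)
    have "Tf m (Suc n) \<alpha> = 2 * fact m * fact (Suc n) * acoef \<alpha> m * acoef \<alpha> (Suc n) / (real N * fact N) * S1"
      by (simp only: Tf_def e1(1) s1)
    also have "\<dots> = fact m * acoef \<alpha> m * (2 * fact (Suc n) * acoef \<alpha> (Suc n)) / (real N * fact N) * S1"
      by (rule h20)
    also have "\<dots> = X * ((\<alpha>^2 - (real n + 1/2)^2) * S1)"
      unfolding fact_acoef_Suc X_def by (rule hT)
    finally show ?thesis .
  qed
  have T2: "Tf (Suc m) n \<alpha> = X * ((\<alpha>^2 - (real m + 1/2)^2) * S2)"
  proof -
    have s2: "(\<Sum>k\<in>{-(int (Suc m) + int n)..int (Suc m) + int n}. (-1)^nat \<bar>k\<bar> * ibinom N (int (Suc m) + k) * ibinom N (int n + k) / (\<alpha> - real_of_int k - 1/2)) = S2"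
      unfolding S2_def e2(2) by (intro sum.cong refl) (simp add: add_ac)
    have "Tf (Suc m) n \<alpha> = 2 * fact (Suc m) * fact n * acoef \<alpha> (Suc m) * acoef \<alpha> n / (real N * fact N) * S2"
      by (simp only: Tf_def e2(1) s2)
    also have "\<dots> = fact n * acoef \<alpha> n * (2 * fact (Suc m) * acoef \<alpha> (Suc m)) / (real N * fact N) * S2"
      by (rule h32)
    also have "\<dots> = X * ((\<alpha>^2 - (real m + 1/2)^2) * S2)"
      unfolding fact_acoef_Suc X_def by (rule h34)
    finally show ?thesis .
  qed
  have st: "(\<alpha>^2 - (real n + 1/2)^2) * S1 - (\<alpha>^2 - (real m + 1/2)^2) * S2 = (real m - real n) * real (N choose m)"
    unfolding S1_def S2_def by (rule star[OF N_def nh])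
  have bf: "fact m * fact n * real (N choose m) = (fact N :: real)"
  proof -
    have "fact m * fact (N - m) * (N choose m) = fact N" by (rule binomial_fact_lemma) (simp add: N_def)
    then have "(fact m * fact n * (N choose m) :: nat) = fact N" by (simp add: N_def)
    then have "real (fact m * fact n * (N choose m)) = real (fact N)" by (simp only:)
    then show ?thesis by (simp only: of_nat_mult of_nat_fact)
  qed
  have "Tf m (Suc n) \<alpha> - Tf (Suc m) n \<alpha> = X * ((\<alpha>^2 - (real n + 1/2)^2) * S1 - (\<alpha>^2 - (real m + 1/2)^2) * S2)"
    unfolding T1 T2 by (simp only: right_diff_distrib)
  also have "\<dots> = X * ((real m - real n) * real (N choose m))" by (simp only: st)
  also have "\<dots> = (real m - real n) * acoef \<alpha> m * acoef \<alpha> n * (fact m * fact n * real (N choose m)) / (real N * fact N)"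
    unfolding X_def by (rule h49)
  also have "\<dots> = (real m - real n) * acoef \<alpha> m * acoef \<alpha> n * fact N / (real N * fact N)"
    by (simp only: bf)
  also have "\<dots> = (real m - real n) * acoef \<alpha> m * acoef \<alpha> n / real N"
    by simp
  also have "\<dots> = ff \<alpha> m n"
    unfolding ff_def N_def of_nat_add by (rule h55)
  finally show ?thesis .
qed

lemma AA_Tf:
  assumes n: "n \<ge> 1" and nh: "\<forall>k::int. \<alpha> \<noteq> real_of_int k + 1/2"
  shows "AA m n \<alpha> = Tf m n \<alpha>"
  using n
proof (induction m arbitrary: n)
  case 0 then show ?case using Tf_0[of n \<alpha>] by (simp add: AA_0n)
next
  case (Suc m)
  have "AA (Suc m) n \<alpha> = AA m (Suc n) \<alpha> - ff \<alpha> m n" using AA_rec[of m n \<alpha>] by simp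
  also have "\<dots> = Tf m (Suc n) \<alpha> - ff \<alpha> m n" using Suc.IH[of "Suc n"] by simp
  also have "\<dots> = Tf (Suc m) n \<alpha>" using K_step[OF Suc.prems nh, of m] by simp
  finally show ?case .
qed

theorem proposition1p12:
  shows "\<exists>A :: nat \<Rightarrow> nat \<Rightarrow> real \<Rightarrow> real.
    (\<forall>\<alpha> i j. lhs_coeff \<alpha> i j = rhs_coeff (\<lambda>m n. A m n \<alpha>) i j)
  \<and> (\<forall>m n. \<exists>p :: rat poly. \<forall>\<alpha>. A m n \<alpha> = poly (map_poly of_rat p) \<alpha>)
  \<and> (\<forall>\<alpha> m n. (m, n) \<noteq> (0, 0) \<longrightarrow>
        A m (n + 1) \<alpha> - A (m + 1) n \<alpha>
          = (real m - real n) / (real m + real n) * acoef \<alpha> m * acoef \<alpha> n)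
  \<and> (\<forall>\<alpha> m. A m 0 \<alpha> = 0) \<and> (\<forall>\<alpha> n. A 0 n \<alpha> = 0)
  \<and> (\<forall>B :: nat \<Rightarrow> nat \<Rightarrow> real \<Rightarrow> real.
        (\<forall>\<alpha> m n. (m, n) \<noteq> (0, 0) \<longrightarrow>
           B m (n + 1) \<alpha> - B (m + 1) n \<alpha>
             = (real m - real n) / (real m + real n) * acoef \<alpha> m * acoef \<alpha> n)
      \<and> (\<forall>\<alpha> m. B m 0 \<alpha> = 0) \<and> (\<forall>\<alpha> n. B 0 n \<alpha> = 0) \<longrightarrow> B = A)
  \<and> (\<forall>\<alpha> m n. 1 \<le> m \<longrightarrow> 1 \<le> n \<longrightarrow>
        A m n \<alpha> = (\<Sum>r\<in>{m..m+n-1}. (real r - real (m+n-1-r)) / real (r + (m+n-1-r))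
                                       * acoef \<alpha> r * acoef \<alpha> (m+n-1-r))
      \<and> A m n \<alpha> = (\<Sum>r\<in>{n..m+n-1}. (real r - real (m+n-1-r)) / real (r + (m+n-1-r))
                                       * acoef \<alpha> r * acoef \<alpha> (m+n-1-r))
      \<and> ((\<forall>k::int. \<alpha> \<noteq> real_of_int k + 1/2) \<longrightarrow>
          A m n \<alpha> = 2 * fact m * fact n * acoef \<alpha> m * acoef \<alpha> n
                      / (real (m+n-1) * fact (m+n-1))
                    * (\<Sum>k\<in>{-(int m + int n)..int m + int n}.
                         (-1) ^ nat \<bar>k\<bar> * ibinom (m+n-1) (int m + k) * ibinom (m+n-1) (int n + k)
                         / (\<alpha> - real_of_int k - 1/2))))"
  proof -
  have rec: "\<forall>\<alpha> m n. (m, n) \<noteq> (0, 0) \<longrightarrow>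
        AA m (n + 1) \<alpha> - AA (m + 1) n \<alpha>
          = (real m - real n) / (real m + real n) * acoef \<alpha> m * acoef \<alpha> n"
    using AA_rec unfolding ff_def by blast
  have poly: "\<forall>m n. \<exists>p :: rat poly. \<forall>\<alpha>. AA m n \<alpha> = poly (map_poly of_rat p) \<alpha>"
    using rpf_ratpoly[OF rpf_AA] by blast
  have uniq: "\<forall>B :: nat \<Rightarrow> nat \<Rightarrow> real \<Rightarrow> real.
        (\<forall>\<alpha> m n. (m, n) \<noteq> (0, 0) \<longrightarrow>
           B m (n + 1) \<alpha> - B (m + 1) n \<alpha>
             = (real m - real n) / (real m + real n) * acoef \<alpha> m * acoef \<alpha> n)
      \<and> (\<forall>\<alpha> m. B m 0 \<alpha> = 0) \<and> (\<forall>\<alpha> n. B 0 n \<alpha> = 0) \<longrightarrow> B = AA"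
    using AA_unique by blast
  have expl: "\<forall>\<alpha> m n. 1 \<le> m \<longrightarrow> 1 \<le> n \<longrightarrow>
        AA m n \<alpha> = (\<Sum>r\<in>{m..m+n-1}. (real r - real (m+n-1-r)) / real (r + (m+n-1-r))
                                       * acoef \<alpha> r * acoef \<alpha> (m+n-1-r))
      \<and> AA m n \<alpha> = (\<Sum>r\<in>{n..m+n-1}. (real r - real (m+n-1-r)) / real (r + (m+n-1-r))
                                       * acoef \<alpha> r * acoef \<alpha> (m+n-1-r))
      \<and> ((\<forall>k::int. \<alpha> \<noteq> real_of_int k + 1/2) \<longrightarrow>
          AA m n \<alpha> = 2 * fact m * fact n * acoef \<alpha> m * acoef \<alpha> n
                      / (real (m+n-1) * fact (m+n-1))
                    * (\<Sum>k\<in>{-(int m + int n)..int m + int n}.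
                         (-1) ^ nat \<bar>k\<bar> * ibinom (m+n-1) (int m + k) * ibinom (m+n-1) (int n + k)
                         / (\<alpha> - real_of_int k - 1/2)))"
  proof (intro allI impI conjI)
    fix \<alpha> :: real and m n :: nat assume "1 \<le> m" "1 \<le> n"
    show "AA m n \<alpha> = (\<Sum>r\<in>{m..m+n-1}. (real r - real (m+n-1-r)) / real (r + (m+n-1-r))
                                       * acoef \<alpha> r * acoef \<alpha> (m+n-1-r))" by (rule AA_def)
    show "AA m n \<alpha> = (\<Sum>r\<in>{n..m+n-1}. (real r - real (m+n-1-r)) / real (r + (m+n-1-r))
                                       * acoef \<alpha> r * acoef \<alpha> (m+n-1-r))" by (rule AA_second)
    assume "\<forall>k::int. \<alpha> \<noteq> real_of_int k + 1/2"
    then show "AA m n \<alpha> = 2 * fact m * fact n * acoef \<alpha> m * acoef \<alpha> n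
                      / (real (m+n-1) * fact (m+n-1))
                    * (\<Sum>k\<in>{-(int m + int n)..int m + int n}.
                         (-1) ^ nat \<bar>k\<bar> * ibinom (m+n-1) (int m + k) * ibinom (m+n-1) (int n + k)
                         / (\<alpha> - real_of_int k - 1/2))"
      using AA_Tf[OF \<open>1 \<le> n\<close>] unfolding Tf_def by blast
  qed
  have c1: "\<forall>\<alpha> i j. lhs_coeff \<alpha> i j = rhs_coeff (\<lambda>m n. AA m n \<alpha>) i j" using coeff_eq by blast
  have c4: "\<forall>\<alpha> m. AA m 0 \<alpha> = 0" using AA_m0 by blast
  have c5: "\<forall>\<alpha> n. AA 0 n \<alpha> = 0" using AA_0n by blast
  show ?thesis
    by (rule exI[of _ AA]) (intro conjI c1 poly rec c4 c5 uniq expl)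
qed

end
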